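(* Let $\Pi$ be the elliptic curve $u^2=(2s+1)(9s^2+2s+1)$ and define rational functions on $\Pi$ $$y=\frac12+\frac{45s^6+20s^5+95s^4+92s^3+39s^2-3}{4(5s^2+1)(s+1)^2\,u},\qquad t=\frac12+\frac{s(2s+1)^2(27s^4+28s^3+26s^2+12s+3)}{(s+1)^3u^3}.$$ Then, using $t$ as a local coordinate on $\Pi$ away from its critical points, $y(t)$ is a solution of $\mathrm{P}_{\mathrm{VI}}$ with parameters $(\theta_1,\theta_2,\theta_3,\theta_4)=(1/2,1/2,1/2,2/3)$.
   Context: $\mathrm{P}_{\mathrm{VI}}$ is the equation $$\frac{d^2y}{dt^2}=\frac12\Big(\frac1y+\frac1{y-1}+\frac1{y-t}\Big)\Big(\frac{dy}{dt}\Big)^2-\Big(\frac1t+\frac1{t-1}+\frac1{y-t}\Big)\frac{dy}{dt}+\frac{y(y-1)(y-t)}{t^2(t-1)^2}\Big(\alpha+\beta\frac{t}{y^2}+\gamma\frac{t-1}{(y-1)^2}+\delta\frac{t(t-1)}{(y-t)^2}\Big),$$ with $\alpha=(\theta_4-1)^2/2$, $\beta=-\theta_1^2/2$, $\gamma=\theta_3^2/2$, $\delta=(1-\theta_2^2)/2$. When $y,t$ are given as rational functions of a parameter on a curve, derivatives with respect to $t$ are computed via the chain rule. *)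

theory Defs
  imports "HOL-Analysis.Analysis"
begin

definition PVI_rhs :: "complex \<Rightarrow> complex \<Rightarrow> complex \<Rightarrow> complex \<Rightarrow>
    complex \<Rightarrow> complex \<Rightarrow> complex \<Rightarrow> complex" where
  "PVI_rhs th1 th2 th3 th4 t y y' =
     (let \<alpha> = (th4 - 1)^2 / 2; \<beta> = - (th1^2) / 2; \<gamma> = th3^2 / 2; \<delta> = (1 - th2^2) / 2 in
       (1/2) * (1/y + 1/(y - 1) + 1/(y - t)) * y'^2
       - (1/t + 1/(t - 1) + 1/(y - t)) * y'
       + (y * (y - 1) * (y - t)) / (t^2 * (t - 1)^2)
         * (\<alpha> + \<beta> * t / y^2 + \<gamma> * (t - 1) / (y - 1)^2 + \<delta> * t * (t - 1) / (y - t)^2))"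

definition solves_PVI_on ::
  "complex \<Rightarrow> complex \<Rightarrow> complex \<Rightarrow> complex \<Rightarrow> (complex \<Rightarrow> complex) \<Rightarrow> complex set \<Rightarrow> bool" where
  "solves_PVI_on th1 th2 th3 th4 y A \<longleftrightarrow>
     y holomorphic_on A \<and>
     (\<forall>t\<in>A. deriv (deriv y) t = PVI_rhs th1 th2 th3 th4 t (y t) (deriv y t))"

definition curve_poly :: "complex \<Rightarrow> complex" where
  "curve_poly z = (2*z + 1) * (9*z^2 + 2*z + 1)"

definition Y_curve :: "complex \<Rightarrow> complex \<Rightarrow> complex" where
  "Y_curve z u = 1/2 + (45*z^6 + 20*z^5 + 95*z^4 + 92*z^3 + 39*z^2 - 3)
                    / (4 * (5*z^2 + 1) * (z + 1)^2 * u)"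

definition T_curve :: "complex \<Rightarrow> complex \<Rightarrow> complex" where
  "T_curve z u = 1/2 + z * (2*z + 1)^2 * (27*z^4 + 28*z^3 + 26*z^2 + 12*z + 3)
                    / ((z + 1)^3 * u^3)"

end

theory Submission
  imports Defs
begin

definition s1 :: "complex \<Rightarrow> complex" where "s1 z = z + 1"
definition s2 :: "complex \<Rightarrow> complex" where "s2 z = 2 * z + 1"
definition sm :: "complex \<Rightarrow> complex" where "sm z = z - 1"
definition p9 :: "complex \<Rightarrow> complex" where "p9 z = 9 * z^2 + 2 * z + 1"
definition p5 :: "complex \<Rightarrow> complex" where "p5 z = 5 * z^2 + 1"
definition t1 :: "complex \<Rightarrow> complex" where "t1 z = 3 * z + 1"
definition t2 :: "complex \<Rightarrow> complex" where "t2 z = 3 * z^2 + 2 * z + 1"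
definition hh :: "complex \<Rightarrow> complex" where "hh z = (- 5 + 42 * z + 315 * z^2 + 740 * z^3 + 825 * z^4 + 450 * z^5 + 225 * z^6)"
definition cc :: "complex \<Rightarrow> complex" where "cc z = (1 + 5 * z + 15 * z^2 + 15 * z^3)"
definition k6 :: "complex \<Rightarrow> complex" where "k6 z = sm z * t1 z^3 * t2 z"
definition Pp :: "complex \<Rightarrow> complex" where "Pp z = s2 z * p9 z"
definition Ppd :: "complex \<Rightarrow> complex" where "Ppd z = (4 + 26 * z + 54 * z^2)"
definition An :: "complex \<Rightarrow> complex" where "An z = (3 * z + 18 * z^2 + 50 * z^3 + 80 * z^4 + 83 * z^5 + 54 * z^6)"
definition And :: "complex \<Rightarrow> complex" where "And z = (3 + 36 * z + 150 * z^2 + 320 * z^3 + 415 * z^4 + 324 * z^5)"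
definition AD :: "complex \<Rightarrow> complex" where "AD z = s1 z^3 * p9 z"
definition ADd :: "complex \<Rightarrow> complex" where "ADd z = (5 + 36 * z + 102 * z^2 + 116 * z^3 + 45 * z^4)"
definition Bn :: "complex \<Rightarrow> complex" where "Bn z = (- 3 + 39 * z^2 + 92 * z^3 + 95 * z^4 + 20 * z^5 + 45 * z^6)"
definition Bnd :: "complex \<Rightarrow> complex" where "Bnd z = (78 * z + 276 * z^2 + 380 * z^3 + 100 * z^4 + 270 * z^5)"
definition BD :: "complex \<Rightarrow> complex" where "BD z = 4 * p5 z * s1 z^2"
definition BDd :: "complex \<Rightarrow> complex" where "BDd z = (8 + 48 * z + 120 * z^2 + 80 * z^3)"
definition KN :: "complex \<Rightarrow> complex" where "KN z = (- 4 - 79 * z - 681 * z^2 - 3841 * z^3 - 15643 * z^4 - 47946 * z^5 - 112534 * z^6 - 201286 * z^7 - 266310 * z^8 - 250695 * z^9 - 158625 * z^10 - 56025 * z^11 - 6075 * z^12)"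
definition KNd :: "complex \<Rightarrow> complex" where "KNd z = (- 79 - 1362 * z - 11523 * z^2 - 62572 * z^3 - 239730 * z^4 - 675204 * z^5 - 1409002 * z^6 - 2130480 * z^7 - 2256255 * z^8 - 1586250 * z^9 - 616275 * z^10 - 72900 * z^11)"
definition KD :: "complex \<Rightarrow> complex" where "KD z = 4 * s2 z * p5 z^2 * k6 z"
definition KDd :: "complex \<Rightarrow> complex" where "KDd z = (- 48 - 536 * z - 3048 * z^2 - 11872 * z^3 - 32800 * z^4 - 64944 * z^5 - 89264 * z^6 - 57120 * z^7 + 58320 * z^8 + 189000 * z^9 + 178200 * z^10)"
definition aF :: "complex \<Rightarrow> complex" where "aF z = An z / AD z"
definition aFd :: "complex \<Rightarrow> complex" where "aFd z = (And z * AD z - An z * ADd z) / (AD z * AD z)"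
definition bF :: "complex \<Rightarrow> complex" where "bF z = Bn z / BD z"
definition bFd :: "complex \<Rightarrow> complex" where "bFd z = (Bnd z * BD z - Bn z * BDd z) / (BD z * BD z)"
definition kF :: "complex \<Rightarrow> complex" where "kF z = KN z / KD z"
definition KPF :: "complex \<Rightarrow> complex" where "KPF z = (KNd z * KD z - KN z * KDd z) / (KD z * KD z)"
definition alF :: "complex \<Rightarrow> complex" where "alF z = - 3 * k6 z * sm z^2 / (s1 z^4 * p9 z^2)"
definition N_q1 :: "complex \<Rightarrow> complex" where "N_q1 z = sm z^3 * t1 z * t2 z * hh z"
definition D_q1 :: "complex \<Rightarrow> complex" where "D_q1 z = 4 * s1 z^4 * p5 z^2"
definition N_q2 :: "complex \<Rightarrow> complex" where "N_q2 z = (-1 * s2 z * sm z^4 * t1 z^4 * t2 z^2)"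
definition D_q2 :: "complex \<Rightarrow> complex" where "D_q2 z = s1 z^6 * p9 z^2"
definition N_c :: "complex \<Rightarrow> complex" where "N_c z = 3 * sm z^3 * t1 z * t2 z * cc z"
definition D_c :: "complex \<Rightarrow> complex" where "D_c z = 4 * s1 z^3 * p9 z * p5 z"
definition N_m1 :: "complex \<Rightarrow> complex" where "N_m1 z = (- 92 - 436 * z + 344 * z^2 + 14584 * z^3 + 88764 * z^4 + 322500 * z^5 + 847952 * z^6 + 1687120 * z^7 + 2508700 * z^8 + 2690900 * z^9 + 2035800 * z^10 + 1135800 * z^11 + 490500 * z^12 + 121500 * z^13)"
definition D_m1 :: "complex \<Rightarrow> complex" where "D_m1 z = 3 * sm z^3 * t1 z * t2 z * hh z * cc z"
definition N_m2 :: "complex \<Rightarrow> complex" where "N_m2 z = (- 4 - 132 * z - 1448 * z^2 - 9816 * z^3 - 46572 * z^4 - 164412 * z^5 - 443504 * z^6 - 921936 * z^7 - 1472092 * z^8 - 1787772 * z^9 - 1614312 * z^10 - 1024344 * z^11 - 403380 * z^12 - 72900 * z^13)"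
definition D_m2 :: "complex \<Rightarrow> complex" where "D_m2 z = 3 * sm z^4 * t1 z^4 * t2 z^2 * cc z"
definition N_ins :: "complex \<Rightarrow> complex" where "N_ins z = (- 518 - 8920 * z - 89025 * z^2 - 673650 * z^3 - 3969519 * z^4 - 18422136 * z^5 - 69884340 * z^6 - 224902560 * z^7 - 625172400 * z^8 - 1498361800 * z^9 - 3055363550 * z^10 - 5207704500 * z^11 - 7286900250 * z^12 - 8264025000 * z^13 - 7620862500 * z^14 - 5870070000 * z^15 - 3854081250 * z^16 - 2025000000 * z^17 - 710015625 * z^18 - 113906250 * z^19 + 11390625 * z^20)"
definition D_ins :: "complex \<Rightarrow> complex" where "D_ins z = 18 * sm z^2 * hh z^2 * cc z^2"
definition N_kp :: "complex \<Rightarrow> complex" where "N_kp z = (31 + 640 * z + 7080 * z^2 + 50382 * z^3 + 256590 * z^4 + 992898 * z^5 + 3033126 * z^6 + 7536678 * z^7 + 15746940 * z^8 + 28826282 * z^9 + 47777726 * z^10 + 71592330 * z^11 + 92843490 * z^12 + 96943590 * z^13 + 74329650 * z^14 + 36734850 * z^15 + 8515125 * z^16 - 911250 * z^17 - 546750 * z^18)"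
definition D_kp :: "complex \<Rightarrow> complex" where "D_kp z = 4 * s2 z^2 * sm z^2 * p5 z^3 * t1 z^4 * t2 z^2"
definition N_T1 :: "complex \<Rightarrow> complex" where "N_T1 z = (- 368 - 16280 * z - 334519 * z^2 - 4261511 * z^3 - 37243366 * z^4 - 225195842 * z^5 - 798611766 * z^6 + 767862302 * z^7 + 37014182218 * z^8 + 337744840366 * z^9 + 2119413464526 * z^10 + 10614521195778 * z^11 + 44726197512706 * z^12 + 162679337794870 * z^13 + 518191340989250 * z^14 + 1458248196876774 * z^15 + 3644859114965938 * z^16 + 8116882867522646 * z^17 + 16129043865517840 * z^18 + 28605777019401524 * z^19 + 45248743389621838 * z^20 + 63735791476718650 * z^21 + 79758574044367230 * z^22 + 88405099020790650 * z^23 + 86469249493403550 * z^24 + 74294908844848650 * z^25 + 55764025827563250 * z^26 + 36307387637124750 * z^27 + 20314953855753750 * z^28 + 9638888593511250 * z^29 + 3800491357893750 * z^30 + 1205825071781250 * z^31 + 292132420593750 * z^32 + 49521812906250 * z^33 + 5040385734375 * z^34 + 224201671875 * z^35)"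
definition D_T1 :: "complex \<Rightarrow> complex" where "D_T1 z = 24 * s2 z^2 * sm z^5 * p5 z^3 * t1 z^7 * t2 z^3 * hh z * cc z"
definition N_T2 :: "complex \<Rightarrow> complex" where "N_T2 z = (- 160 - 7416 * z - 123456 * z^2 - 696432 * z^3 + 8286480 * z^4 + 231895152 * z^5 + 2923377872 * z^6 + 25972089936 * z^7 + 181759316880 * z^8 + 1053541377232 * z^9 + 5204088585936 * z^10 + 22308509134416 * z^11 + 84022765902416 * z^12 + 280472552670000 * z^13 + 834853198184208 * z^14 + 2225328657218320 * z^15 + 5326384608733584 * z^16 + 11465049672917088 * z^17 + 22202639595360144 * z^18 + 38660814124858800 * z^19 + 60439993089702192 * z^20 + 84629172335433040 * z^21 + 105781851155376240 * z^22 + 117521681967586800 * z^23 + 115416384708999600 * z^24 + 99515520116910000 * z^25 + 74689740469350000 * z^26 + 48264873845670000 * z^27 + 26472792463110000 * z^28 + 12087674570250000 * z^29 + 4468586897070000 * z^30 + 1281217755150000 * z^31 + 264951878850000 * z^32 + 34388661375000 * z^33 + 1992903750000 * z^34)"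
definition D_T2 :: "complex \<Rightarrow> complex" where "D_T2 z = 24 * s2 z^2 * sm z^5 * p5 z^3 * t1 z^7 * t2 z^3 * hh z * cc z"
definition N_T3 :: "complex \<Rightarrow> complex" where "N_T3 z = (518 + 16690 * z + 288611 * z^2 + 3525703 * z^3 + 33656570 * z^4 + 263771374 * z^5 + 1746751306 * z^6 + 9962425790 * z^7 + 49618872418 * z^8 + 218119571910 * z^9 + 853319798742 * z^10 + 2989816425306 * z^11 + 9423708159938 * z^12 + 26787910900486 * z^13 + 68709886335842 * z^14 + 158771669601830 * z^15 + 329261095313830 * z^16 + 608943008673554 * z^17 + 994883760821596 * z^18 + 1415690180809112 * z^19 + 1714761155069614 * z^20 + 1692629830636170 * z^21 + 1217681948739390 * z^22 + 344872801028250 * z^23 - 663771214982250 * z^24 - 1466463904451550 * z^25 - 1831914344211750 * z^26 - 1742147019920250 * z^27 - 1349200416566250 * z^28 - 860104882698750 * z^29 - 441956495126250 * z^30 - 174378381018750 * z^31 - 48459956062500 * z^32 - 7894113187500 * z^33 - 323846859375 * z^34 + 74733890625 * z^35)"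
definition D_T3 :: "complex \<Rightarrow> complex" where "D_T3 z = 24 * s2 z^2 * sm z^5 * p5 z^3 * t1 z^7 * t2 z^3 * hh z * cc z"
definition N_L :: "complex \<Rightarrow> complex" where "N_L z = (310 + 7826 * z + 77548 * z^2 - 39376 * z^3 - 11873276 * z^4 - 193319620 * z^5 - 1975238332 * z^6 - 15241801844 * z^7 - 95126262244 * z^8 - 497676964956 * z^9 - 2231355322668 * z^10 - 8704171513332 * z^11 - 29872860229772 * z^12 - 91005303974644 * z^13 - 247951970859116 * z^14 - 608308790739716 * z^15 - 1352264398453816 * z^16 - 2739223796720888 * z^17 - 5078711969020708 * z^18 - 8639346924648164 * z^19 - 13476488545010740 * z^20 - 19200751028078220 * z^21 - 24805595162269620 * z^22 - 28771710145767900 * z^23 - 29610906430578300 * z^24 - 26687075176512900 * z^25 - 20757628985998500 * z^26 - 13699633228465500 * z^27 - 7507039023922500 * z^28 - 3308890859437500 * z^29 - 1110052034302500 * z^30 - 249771064387500 * z^31 - 21279414318750 * z^32 + 7239038343750 * z^33 + 2723635125000 * z^34 + 298935562500 * z^35)"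
definition D_L :: "complex \<Rightarrow> complex" where "D_L z = 24 * s2 z^2 * sm z^5 * p5 z^3 * t1 z^7 * t2 z^3 * hh z * cc z"

lemma st_q1:
  assumes nz: "s1 z \<noteq> 0" "p9 z \<noteq> 0" "p5 z \<noteq> 0"
  shows "4*bF z^2-Pp z = N_q1 z / D_q1 z"
  unfolding bF_def BD_def Pp_def D_q1_def
  using nz
  apply (simp add: field_simps)
  apply (thin_tac "_ \<noteq> 0")+
  apply (unfold s1_def s2_def sm_def p9_def p5_def t1_def t2_def hh_def cc_def k6_def Pp_def Ppd_def An_def And_def AD_def ADd_def Bn_def Bnd_def BD_def BDd_def KN_def KNd_def KD_def KDd_def N_q1_def D_q1_def N_q2_def D_q2_def N_c_def D_c_def N_m1_def D_m1_def N_m2_def D_m2_def N_ins_def D_ins_def N_kp_def D_kp_def N_T1_def D_T1_def N_T2_def D_T2_def N_T3_def D_T3_def N_L_def D_L_def)?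
  apply (algebra)?
  done

lemma st_q2:
  assumes nz: "s1 z \<noteq> 0" "p9 z \<noteq> 0" "p5 z \<noteq> 0"
  shows "4*aF z^2-Pp z = N_q2 z / D_q2 z"
  unfolding aF_def AD_def Pp_def D_q2_def
  using nz
  apply (simp add: field_simps)
  apply (thin_tac "_ \<noteq> 0")+
  apply (unfold s1_def s2_def sm_def p9_def p5_def t1_def t2_def hh_def cc_def k6_def Pp_def Ppd_def An_def And_def AD_def ADd_def Bn_def Bnd_def BD_def BDd_def KN_def KNd_def KD_def KDd_def N_q1_def D_q1_def N_q2_def D_q2_def N_c_def D_c_def N_m1_def D_m1_def N_m2_def D_m2_def N_ins_def D_ins_def N_kp_def D_kp_def N_T1_def D_T1_def N_T2_def D_T2_def N_T3_def D_T3_def N_L_def D_L_def)?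
  apply (algebra)?
  done

lemma st_c:
  assumes nz: "s1 z \<noteq> 0" "p9 z \<noteq> 0" "p5 z \<noteq> 0"
  shows "bF z-aF z = N_c z / D_c z"
  unfolding aF_def bF_def AD_def BD_def D_c_def
  using nz
  apply (simp add: field_simps)
  apply (thin_tac "_ \<noteq> 0")+
  apply (unfold s1_def s2_def sm_def p9_def p5_def t1_def t2_def hh_def cc_def k6_def Pp_def Ppd_def An_def And_def AD_def ADd_def Bn_def Bnd_def BD_def BDd_def KN_def KNd_def KD_def KDd_def N_q1_def D_q1_def N_q2_def D_q2_def N_c_def D_c_def N_m1_def D_m1_def N_m2_def D_m2_def N_ins_def D_ins_def N_kp_def D_kp_def N_T1_def D_T1_def N_T2_def D_T2_def N_T3_def D_T3_def N_L_def D_L_def)?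
  apply (algebra)?
  done

lemma st_m1:
  assumes nz: "s1 z \<noteq> 0" "s2 z \<noteq> 0" "sm z \<noteq> 0" "p9 z \<noteq> 0" "p5 z \<noteq> 0" "t1 z \<noteq> 0" "t2 z \<noteq> 0" "hh z \<noteq> 0" "cc z \<noteq> 0"
  shows "8*bF z/(4*bF z^2-Pp z) + 1/(bF z-aF z) = N_m1 z / D_m1 z"
  unfolding st_q1[OF nz(1,4,5)] st_c[OF nz(1,4,5)]
  unfolding bF_def BD_def D_q1_def D_c_def N_q1_def N_c_def D_m1_def
  using nz
  apply (simp add: field_simps)
  apply (thin_tac "_ \<noteq> 0")+
  apply (unfold s1_def s2_def sm_def p9_def p5_def t1_def t2_def hh_def cc_def k6_def Pp_def Ppd_def An_def And_def AD_def ADd_def Bn_def Bnd_def BD_def BDd_def KN_def KNd_def KD_def KDd_def N_q1_def D_q1_def N_q2_def D_q2_def N_c_def D_c_def N_m1_def D_m1_def N_m2_def D_m2_def N_ins_def D_ins_def N_kp_def D_kp_def N_T1_def D_T1_def N_T2_def D_T2_def N_T3_def D_T3_def N_L_def D_L_def)?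
  apply (algebra)?
  done

lemma st_m2:
  assumes nz: "s1 z \<noteq> 0" "s2 z \<noteq> 0" "sm z \<noteq> 0" "p9 z \<noteq> 0" "p5 z \<noteq> 0" "t1 z \<noteq> 0" "t2 z \<noteq> 0" "hh z \<noteq> 0" "cc z \<noteq> 0"
  shows "8*aF z/(4*aF z^2-Pp z) + 1/(bF z-aF z) = N_m2 z / D_m2 z"
  unfolding st_q2[OF nz(1,4,5)] st_c[OF nz(1,4,5)]
  unfolding aF_def AD_def D_q2_def D_c_def N_q2_def N_c_def D_m2_def
  using nz
  apply (simp add: field_simps)
  apply (thin_tac "_ \<noteq> 0")+
  apply (unfold s1_def s2_def sm_def p9_def p5_def t1_def t2_def hh_def cc_def k6_def Pp_def Ppd_def An_def And_def AD_def ADd_def Bn_def Bnd_def BD_def BDd_def KN_def KNd_def KD_def KDd_def N_q1_def D_q1_def N_q2_def D_q2_def N_c_def D_c_def N_m1_def D_m1_def N_m2_def D_m2_def N_ins_def D_ins_def N_kp_def D_kp_def N_T1_def D_T1_def N_T2_def D_T2_def N_T3_def D_T3_def N_L_def D_L_def)?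
  apply (algebra)?
  done

lemma st_ins:
  assumes nz: "s1 z \<noteq> 0" "s2 z \<noteq> 0" "sm z \<noteq> 0" "p9 z \<noteq> 0" "p5 z \<noteq> 0" "t1 z \<noteq> 0" "t2 z \<noteq> 0" "hh z \<noteq> 0" "cc z \<noteq> 0"
  shows "1/18 - (1/2)*Pp z*(Pp z+4*bF z^2-8*aF z*bF z)/(4*bF z^2-Pp z)^2 + 3*(4*aF z^2-Pp z)/(32*(bF z-aF z)^2) = N_ins z / D_ins z"
  unfolding st_q1[OF nz(1,4,5)] st_q2[OF nz(1,4,5)] st_c[OF nz(1,4,5)]
  unfolding aF_def bF_def AD_def BD_def Pp_def D_q1_def D_q2_def D_c_def N_q1_def N_q2_def N_c_def D_ins_def
  using nz
  apply (simp add: field_simps)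
  apply (thin_tac "_ \<noteq> 0")+
  apply (unfold s1_def s2_def sm_def p9_def p5_def t1_def t2_def hh_def cc_def k6_def Pp_def Ppd_def An_def And_def AD_def ADd_def Bn_def Bnd_def BD_def BDd_def KN_def KNd_def KD_def KDd_def N_q1_def D_q1_def N_q2_def D_q2_def N_c_def D_c_def N_m1_def D_m1_def N_m2_def D_m2_def N_ins_def D_ins_def N_kp_def D_kp_def N_T1_def D_T1_def N_T2_def D_T2_def N_T3_def D_T3_def N_L_def D_L_def)?
  apply (algebra)?
  done

lemma st_T1:
  assumes nz: "s1 z \<noteq> 0" "s2 z \<noteq> 0" "sm z \<noteq> 0" "p9 z \<noteq> 0" "p5 z \<noteq> 0" "t1 z \<noteq> 0" "t2 z \<noteq> 0" "hh z \<noteq> 0" "cc z \<noteq> 0"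
  shows "(1/2)*(8*bF z/(4*bF z^2-Pp z) + 1/(bF z-aF z))*kF z^2 = N_T1 z / D_T1 z"
  unfolding st_m1[OF nz]
  unfolding kF_def KD_def k6_def D_m1_def D_T1_def
  using nz
  apply (simp add: field_simps)
  apply (thin_tac "_ \<noteq> 0")+
  apply (unfold s1_def s2_def sm_def p9_def p5_def t1_def t2_def hh_def cc_def k6_def Pp_def Ppd_def An_def And_def AD_def ADd_def Bn_def Bnd_def BD_def BDd_def KN_def KNd_def KD_def KDd_def N_q1_def D_q1_def N_q2_def D_q2_def N_c_def D_c_def N_m1_def D_m1_def N_m2_def D_m2_def N_ins_def D_ins_def N_kp_def D_kp_def N_T1_def D_T1_def N_T2_def D_T2_def N_T3_def D_T3_def N_L_def D_L_def)?
  apply (algebra)?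
  done

lemma st_T2:
  assumes nz: "s1 z \<noteq> 0" "s2 z \<noteq> 0" "sm z \<noteq> 0" "p9 z \<noteq> 0" "p5 z \<noteq> 0" "t1 z \<noteq> 0" "t2 z \<noteq> 0" "hh z \<noteq> 0" "cc z \<noteq> 0"
  shows "(8*aF z/(4*aF z^2-Pp z) + 1/(bF z-aF z))*kF z = N_T2 z / D_T2 z"
  unfolding st_m2[OF nz]
  unfolding kF_def KD_def k6_def D_m2_def D_T2_def
  using nz
  apply (simp add: field_simps)
  apply (thin_tac "_ \<noteq> 0")+
  apply (unfold s1_def s2_def sm_def p9_def p5_def t1_def t2_def hh_def cc_def k6_def Pp_def Ppd_def An_def And_def AD_def ADd_def Bn_def Bnd_def BD_def BDd_def KN_def KNd_def KD_def KDd_def N_q1_def D_q1_def N_q2_def D_q2_def N_c_def D_c_def N_m1_def D_m1_def N_m2_def D_m2_def N_ins_def D_ins_def N_kp_def D_kp_def N_T1_def D_T1_def N_T2_def D_T2_def N_T3_def D_T3_def N_L_def D_L_def)?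
  apply (algebra)?
  done

lemma st_T3:
  assumes nz: "s1 z \<noteq> 0" "s2 z \<noteq> 0" "sm z \<noteq> 0" "p9 z \<noteq> 0" "p5 z \<noteq> 0" "t1 z \<noteq> 0" "t2 z \<noteq> 0" "hh z \<noteq> 0" "cc z \<noteq> 0"
  shows "4*(4*bF z^2-Pp z)*(bF z-aF z)/(4*aF z^2-Pp z)^2 * (1/18 - (1/2)*Pp z*(Pp z+4*bF z^2-8*aF z*bF z)/(4*bF z^2-Pp z)^2 + 3*(4*aF z^2-Pp z)/(32*(bF z-aF z)^2)) = N_T3 z / D_T3 z"
  unfolding st_ins[OF nz]
  unfolding st_q1[OF nz(1,4,5)] st_q2[OF nz(1,4,5)] st_c[OF nz(1,4,5)]
  unfolding D_ins_def D_q1_def D_q2_def D_c_def N_q1_def N_q2_def N_c_def D_T3_def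
  using nz
  apply (simp add: field_simps)
  apply (thin_tac "_ \<noteq> 0")+
  apply (unfold s1_def s2_def sm_def p9_def p5_def t1_def t2_def hh_def cc_def k6_def Pp_def Ppd_def An_def And_def AD_def ADd_def Bn_def Bnd_def BD_def BDd_def KN_def KNd_def KD_def KDd_def N_q1_def D_q1_def N_q2_def D_q2_def N_c_def D_c_def N_m1_def D_m1_def N_m2_def D_m2_def N_ins_def D_ins_def N_kp_def D_kp_def N_T1_def D_T1_def N_T2_def D_T2_def N_T3_def D_T3_def N_L_def D_L_def)?
  apply (algebra)?
  done

lemma st_kp:
  assumes nz: "s1 z \<noteq> 0" "s2 z \<noteq> 0" "sm z \<noteq> 0" "p9 z \<noteq> 0" "p5 z \<noteq> 0" "t1 z \<noteq> 0" "t2 z \<noteq> 0" "hh z \<noteq> 0" "cc z \<noteq> 0"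
  shows "KPF z = N_kp z / D_kp z"
  unfolding KPF_def KD_def k6_def D_kp_def
  using nz
  apply (simp add: field_simps)
  apply (thin_tac "_ \<noteq> 0")+
  apply (unfold s1_def s2_def sm_def p9_def p5_def t1_def t2_def hh_def cc_def k6_def Pp_def Ppd_def An_def And_def AD_def ADd_def Bn_def Bnd_def BD_def BDd_def KN_def KNd_def KD_def KDd_def N_q1_def D_q1_def N_q2_def D_q2_def N_c_def D_c_def N_m1_def D_m1_def N_m2_def D_m2_def N_ins_def D_ins_def N_kp_def D_kp_def N_T1_def D_T1_def N_T2_def D_T2_def N_T3_def D_T3_def N_L_def D_L_def)?
  apply (algebra)?
  done

lemma st_L:
  assumes nz: "s1 z \<noteq> 0" "s2 z \<noteq> 0" "sm z \<noteq> 0" "p9 z \<noteq> 0" "p5 z \<noteq> 0" "t1 z \<noteq> 0" "t2 z \<noteq> 0" "hh z \<noteq> 0" "cc z \<noteq> 0"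
  shows "KPF z / alF z = N_L z / D_L z"
  unfolding st_kp[OF nz]
  unfolding alF_def k6_def D_kp_def D_L_def
  using nz
  apply (simp add: field_simps)
  apply (thin_tac "_ \<noteq> 0")+
  apply (unfold s1_def s2_def sm_def p9_def p5_def t1_def t2_def hh_def cc_def k6_def Pp_def Ppd_def An_def And_def AD_def ADd_def Bn_def Bnd_def BD_def BDd_def KN_def KNd_def KD_def KDd_def N_q1_def D_q1_def N_q2_def D_q2_def N_c_def D_c_def N_m1_def D_m1_def N_m2_def D_m2_def N_ins_def D_ins_def N_kp_def D_kp_def N_T1_def D_T1_def N_T2_def D_T2_def N_T3_def D_T3_def N_L_def D_L_def)?
  apply (algebra)?
  done

lemma C5:
  assumes nz: "s1 z \<noteq> 0" "s2 z \<noteq> 0" "sm z \<noteq> 0" "p9 z \<noteq> 0" "p5 z \<noteq> 0" "t1 z \<noteq> 0" "t2 z \<noteq> 0" "hh z \<noteq> 0" "cc z \<noteq> 0"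
  shows "(1/2)*(8*bF z/(4*bF z^2-Pp z) + 1/(bF z-aF z))*kF z^2 - (8*aF z/(4*aF z^2-Pp z) + 1/(bF z-aF z))*kF z + 4*(4*bF z^2-Pp z)*(bF z-aF z)/(4*aF z^2-Pp z)^2 * (1/18 - (1/2)*Pp z*(Pp z+4*bF z^2-8*aF z*bF z)/(4*bF z^2-Pp z)^2 + 3*(4*aF z^2-Pp z)/(32*(bF z-aF z)^2)) = KPF z / alF z"
proof -
  have e: "N_T1 z - N_T2 z + N_T3 z = N_L z"
    unfolding N_T1_def N_T2_def N_T3_def N_L_def by algebra
  have dd: "D_T2 z = D_T1 z" "D_T3 z = D_T1 z" "D_L z = D_T1 z"
    unfolding D_T1_def D_T2_def D_T3_def D_L_def by simp_all
  show ?thesis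
    unfolding st_T1[OF nz] st_T2[OF nz] st_T3[OF nz] st_L[OF nz] dd
    unfolding e[symmetric] by (simp add: diff_divide_distrib add_divide_distrib)
qed

lemma PVI_spec:
  "PVI_rhs (1/2) (1/2) (1/2) (2/3) t y k =
    (1/2)*(1/y+1/(y-1)+1/(y-t))*k^2 - (1/t+1/(t-1)+1/(y-t))*k
    + (y*(y-1)*(y-t))/(t^2*(t-1)^2) *
      (1/18 + (-1/8)*t/y^2 + (1/8)*(t-1)/(y-1)^2 + (3/8)*t*(t-1)/(y-t)^2)"
  unfolding PVI_rhs_def Let_def by (simp add: power2_eq_square)

lemma comb_lemma:
  fixes u X1 X2 Z V V' W k :: complex
  assumes "V = - V'"
  shows "(1/2)*(u*X1)*k^2 - (u*X2)*k + (u*Z)*(1/18 + V + W) = u*((1/2)*X1*k^2 - X2*k + Z*(1/18 - V' + W))"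
  using assms by (simp add: algebra_simps)

lemma generic_rhs:
  fixes u a b k :: complex
  assumes u: "u \<noteq> 0"
  and n1: "u + 2*b \<noteq> 0" and n2: "2*b - u \<noteq> 0" and n3: "b - a \<noteq> 0"
  and n4: "u + 2*a \<noteq> 0" and n5: "2*a - u \<noteq> 0"
  shows "PVI_rhs (1/2) (1/2) (1/2) (2/3) (1/2 + a/u) (1/2 + b/u) k =
     u * ((1/2)*(8*b/(4*b^2-u^2) + 1/(b-a))*k^2 - (8*a/(4*a^2-u^2) + 1/(b-a))*k
        + 4*(4*b^2-u^2)*(b-a)/(4*a^2-u^2)^2 * (1/18 - (1/2)*u^2*(u^2+4*b^2-8*a*b)/(4*b^2-u^2)^2
            + 3*(4*a^2-u^2)/(32*(b-a)^2)))"
proof -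
  define y where "y = 1/2 + b/u"
  define t where "t = 1/2 + a/u"
  have ey1: "y - 1 = (2*b-u)/(2*u)" using u unfolding y_def by (simp add: field_simps)
  have eyt: "y - t = (b-a)/u" using u unfolding y_def t_def by (simp add: field_simps)
  have et1: "t - 1 = (2*a-u)/(2*u)" using u unfolding t_def by (simp add: field_simps)
  have ey: "y = (u+2*b)/(2*u)" using u unfolding y_def by (simp add: field_simps)
  have et: "t = (u+2*a)/(2*u)" using u unfolding t_def by (simp add: field_simps)
  have q1: "4*b^2-u^2 = (u+2*b)*(2*b-u)" by algebra
  have q2: "4*a^2-u^2 = (u+2*a)*(2*a-u)" by algebra
  have nq1: "4*b^2-u^2 \<noteq> 0" unfolding q1 using n1 n2 by simp
  have nq2: "4*a^2-u^2 \<noteq> 0" unfolding q2 using n4 n5 by simp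
  have nq1': "b*(b*4) - u*u \<noteq> 0" proof - have "b*(b*4) - u*u = 4*b^2-u^2" by algebra then show ?thesis using nq1 by simp qed
  have nq2': "a*(a*4) - u*u \<noteq> 0" proof - have "a*(a*4) - u*u = 4*a^2-u^2" by algebra then show ?thesis using nq2 by simp qed
  have h1: "1/y+1/(y-1)+1/(y-t) = u*(8*b/((u+2*b)*(2*b-u)) + 1/(b-a))"
    apply (simp only: ey1 eyt)
    apply (simp only: ey )
    using nq1 nq2 nq1' nq2' u n1 n2 n3 apply (simp add: field_simps) apply (algebra)? done
  have h2: "1/t+1/(t-1)+1/(y-t) = u*(8*a/((u+2*a)*(2*a-u)) + 1/(b-a))"
    apply (simp only: et1 eyt)
    apply (simp only: et )
    using nq1 nq2 nq1' nq2' u n4 n5 n3 apply (simp add: field_simps) apply (algebra)? done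
  have h4: "(y*(y-1)*(y-t))/(t^2*(t-1)^2) = u * (4*((u+2*b)*(2*b-u))*(b-a)/((u+2*a)*(2*a-u))^2)"
    apply (simp only: ey1 eyt et1)
    apply (simp only: ey et q1 )
    using nq1 nq2 nq1' nq2' u n1 n2 n3 n4 n5 apply (simp add: field_simps) apply (algebra)? done
  have h5: "(-1/8)*t/y^2 + (1/8)*(t-1)/(y-1)^2 = - (1/2)*u^2*(u^2+4*b^2-8*a*b)/((u+2*b)*(2*b-u))^2"
    apply (simp only: ey1 et1)
    apply (simp only: ey et )
    using nq1 nq2 nq1' nq2' u n1 n2 apply (simp add: field_simps) apply (algebra)? done
  have h6: "(3/8)*t*(t-1)/(y-t)^2 = 3*((u+2*a)*(2*a-u))/(32*(b-a)^2)"
    apply (simp only: eyt et1)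
    apply (simp only: et )
    using nq1 nq2 nq1' nq2' u n3 apply (simp add: field_simps) apply (algebra)? done
  have "PVI_rhs (1/2) (1/2) (1/2) (2/3) t y k =
    (1/2)*(1/y+1/(y-1)+1/(y-t))*k^2 - (1/t+1/(t-1)+1/(y-t))*k
    + (y*(y-1)*(y-t))/(t^2*(t-1)^2) *
      (1/18 + ((-1/8)*t/y^2 + (1/8)*(t-1)/(y-1)^2) + (3/8)*t*(t-1)/(y-t)^2)"
    unfolding PVI_spec by (simp add: algebra_simps)
  also have "\<dots> = u * ((1/2)*(8*b/(4*b^2-u^2) + 1/(b-a))*k^2 - (8*a/(4*a^2-u^2) + 1/(b-a))*k
        + 4*(4*b^2-u^2)*(b-a)/(4*a^2-u^2)^2 * (1/18 - (1/2)*u^2*(u^2+4*b^2-8*a*b)/(4*b^2-u^2)^2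
            + 3*(4*a^2-u^2)/(32*(b-a)^2)))"
    unfolding h1 h2 h4 h5 h6 q1 q2 by (rule comb_lemma) simp
  finally show ?thesis unfolding y_def t_def .
qed


lemma C2:
  assumes "s1 z \<noteq> 0" "p9 z \<noteq> 0" "s2 z \<noteq> 0"
  shows "aFd z - aF z * Ppd z / (2 * Pp z) = alF z"
  unfolding aFd_def aF_def alF_def Pp_def AD_def using assms
  apply (simp add: field_simps)
  apply (thin_tac "_ \<noteq> 0")+
  apply (unfold s1_def s2_def sm_def p9_def p5_def t1_def t2_def hh_def cc_def k6_def Pp_def Ppd_def An_def And_def AD_def ADd_def Bn_def Bnd_def BD_def BDd_def KN_def KNd_def KD_def KDd_def N_q1_def D_q1_def N_q2_def D_q2_def N_c_def D_c_def N_m1_def D_m1_def N_m2_def D_m2_def N_ins_def D_ins_def N_kp_def D_kp_def N_T1_def D_T1_def N_T2_def D_T2_def N_T3_def D_T3_def N_L_def D_L_def)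
  apply algebra
  done

lemma C3:
  assumes "s1 z \<noteq> 0" "p9 z \<noteq> 0" "s2 z \<noteq> 0" "p5 z \<noteq> 0" "k6 z \<noteq> 0"
  shows "bFd z - bF z * Ppd z / (2 * Pp z) = kF z * alF z"
  unfolding bFd_def bF_def kF_def alF_def Pp_def BD_def KD_def using assms
  apply (simp add: field_simps)
  apply (thin_tac "_ \<noteq> 0")+
  apply (unfold s1_def s2_def sm_def p9_def p5_def t1_def t2_def hh_def cc_def k6_def Pp_def Ppd_def An_def And_def AD_def ADd_def Bn_def Bnd_def BD_def BDd_def KN_def KNd_def KD_def KDd_def N_q1_def D_q1_def N_q2_def D_q2_def N_c_def D_c_def N_m1_def D_m1_def N_m2_def D_m2_def N_ins_def D_ins_def N_kp_def D_kp_def N_T1_def D_T1_def N_T2_def D_T2_def N_T3_def D_T3_def N_L_def D_L_def)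
  apply algebra
  done

lemma dpoly_An: "(An has_field_derivative And z) (at z)"
  unfolding An_def[abs_def] And_def
  apply (rule derivative_eq_intros refl)+
  apply simp apply (algebra)? done

lemma dpoly_AD: "(AD has_field_derivative ADd z) (at z)"
  unfolding AD_def[abs_def] ADd_def s1_def p9_def
  apply (rule derivative_eq_intros refl)+
  apply simp apply (algebra)? done

lemma dpoly_Bn: "(Bn has_field_derivative Bnd z) (at z)"
  unfolding Bn_def[abs_def] Bnd_def
  apply (rule derivative_eq_intros refl)+
  apply simp apply (algebra)? done

lemma dpoly_BD: "(BD has_field_derivative BDd z) (at z)"
  unfolding BD_def[abs_def] BDd_def s1_def p5_def
  apply (rule derivative_eq_intros refl)+
  apply simp apply (algebra)? done

lemma dpoly_KN: "(KN has_field_derivative KNd z) (at z)"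
  unfolding KN_def[abs_def] KNd_def
  apply (rule derivative_eq_intros refl)+
  apply simp apply (algebra)? done

lemma dpoly_KD: "(KD has_field_derivative KDd z) (at z)"
  unfolding KD_def[abs_def] KDd_def s2_def p5_def k6_def sm_def t1_def t2_def
  apply (rule derivative_eq_intros refl)+
  apply simp apply (algebra)? done

lemma dpoly_Pp: "(Pp has_field_derivative Ppd z) (at z)"
  unfolding Pp_def[abs_def] Ppd_def s2_def p9_def
  apply (rule derivative_eq_intros refl)+
  apply simp apply (algebra)? done

lemma d_aF: "AD z \<noteq> 0 \<Longrightarrow> (aF has_field_derivative aFd z) (at z)"
  unfolding aF_def[abs_def] aFd_def by (rule DERIV_divide[OF dpoly_An dpoly_AD])

lemma d_bF: "BD z \<noteq> 0 \<Longrightarrow> (bF has_field_derivative bFd z) (at z)"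
  unfolding bF_def[abs_def] bFd_def by (rule DERIV_divide[OF dpoly_Bn dpoly_BD])

lemma d_kF: "KD z \<noteq> 0 \<Longrightarrow> (kF has_field_derivative KPF z) (at z)"
  unfolding kF_def[abs_def] KPF_def by (rule DERIV_divide[OF dpoly_KN dpoly_KD])

lemma T_form:
  assumes "u \<noteq> 0" "u^2 = Pp z" "s1 z \<noteq> 0" "p9 z \<noteq> 0" "s2 z \<noteq> 0"
  shows "T_curve z u = 1/2 + aF z / u"
proof -
  have u3: "u^3 = u * (s2 z * p9 z)" using assms(2) unfolding Pp_def by (simp add: power3_eq_cube power2_eq_square)
  have e: "(z + 1)^3 * u^3 = s1 z^3 * u * (s2 z * p9 z)" unfolding u3 s1_def by simp
  show ?thesis unfolding T_curve_def e aF_def AD_def using assms(1,3,4,5)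
    apply (simp add: field_simps)
    apply (thin_tac "_ \<noteq> _")+
    apply (unfold An_def s1_def s2_def p9_def)
    apply (algebra)? done
qed

lemma Y_form:
  assumes "u \<noteq> 0" "s1 z \<noteq> 0" "p5 z \<noteq> 0"
  shows "Y_curve z u = 1/2 + bF z / u"
proof -
  have e: "4 * (5*z^2 + 1) * (z + 1)^2 * u = BD z * u" unfolding BD_def s1_def p5_def by simp
  have "BD z \<noteq> 0" using assms unfolding BD_def by simp
  then show ?thesis unfolding Y_curve_def e bF_def using assms(1)
    apply (simp add: field_simps)
    apply (thin_tac "_ \<noteq> _")+
    apply (unfold Bn_def BD_def s1_def p5_def)
    apply (algebra)? done
qed

theorem mainTheorem11:
  fixes A :: "complex set" and S U :: "complex \<Rightarrow> complex"
  assumes "open A"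
    and "S holomorphic_on A" and "U holomorphic_on A"
    and "\<And>t. t \<in> A \<Longrightarrow> (U t)^2 = curve_poly (S t)"
    and "\<And>t. t \<in> A \<Longrightarrow> T_curve (S t) (U t) = t"
    and "\<And>t. t \<in> A \<Longrightarrow> U t \<noteq> 0 \<and> S t + 1 \<noteq> 0 \<and> 5 * (S t)^2 + 1 \<noteq> 0"
    and "\<And>t. t \<in> A \<Longrightarrow> t \<noteq> 0 \<and> t \<noteq> 1"
    and "\<And>t. t \<in> A \<Longrightarrow> Y_curve (S t) (U t) \<noteq> 0 \<and> Y_curve (S t) (U t) \<noteq> 1
                              \<and> Y_curve (S t) (U t) \<noteq> t"
  shows "solves_PVI_on (1/2) (1/2) (1/2) (2/3) (\<lambda>t. Y_curve (S t) (U t)) A"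
proof -
  note oA = assms(1)
  have cp: "curve_poly z = Pp z" for z unfolding curve_poly_def Pp_def s2_def p9_def by simp
  have basic: "U t \<noteq> 0 \<and> s1 (S t) \<noteq> 0 \<and> p5 (S t) \<noteq> 0 \<and> s2 (S t) \<noteq> 0 \<and> p9 (S t) \<noteq> 0
      \<and> (U t)^2 = Pp (S t)" if "t \<in> A" for t
  proof -
    have u2: "(U t)^2 = Pp (S t)" using assms(4)[OF that] cp by simp
    have "Pp (S t) \<noteq> 0" using u2 assms(6)[OF that] by auto
    then show ?thesis using u2 assms(6)[OF that] unfolding Pp_def s1_def p5_def by auto
  qed
  have Tf: "t = 1/2 + aF (S t) / U t" if "t \<in> A" for t
    using assms(5)[OF that] T_form[of "U t" "S t"] basic[OF that] by auto
  have Yf: "Y_curve (S t) (U t) = 1/2 + bF (S t) / U t" if "t \<in> A" for t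
    using Y_form[of "U t" "S t"] basic[OF that] by auto
  have dS: "(S has_field_derivative deriv S t) (at t)" if "t \<in> A" for t
    using holomorphic_derivI[OF assms(2) oA that] .
  have dU: "(U has_field_derivative deriv U t) (at t)" if "t \<in> A" for t
    using holomorphic_derivI[OF assms(3) oA that] .
  have ADnz: "AD (S t) \<noteq> 0" if "t \<in> A" for t using basic[OF that] unfolding AD_def by simp
  have BDnz: "BD (S t) \<noteq> 0" if "t \<in> A" for t using basic[OF that] unfolding BD_def by simp
  have key: "deriv S t * alF (S t) = U t \<and> deriv (\<lambda>t. Y_curve (S t) (U t)) t = kF (S t)
             \<and> alF (S t) \<noteq> 0 \<and> k6 (S t) \<noteq> 0 \<and> sm (S t) \<noteq> 0" if tA: "t \<in> A" for t
  proof -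
    define z where "z = S t"
    define u where "u = U t"
    define S' where "S' = deriv S t"
    define U' where "U' = deriv U t"
    have b: "u \<noteq> 0" "s1 z \<noteq> 0" "p5 z \<noteq> 0" "s2 z \<noteq> 0" "p9 z \<noteq> 0" "u^2 = Pp z"
      using basic[OF tA] unfolding z_def u_def by auto
    have d1: "((\<lambda>t. U t^2 - Pp (S t)) has_field_derivative (2 * u * U' - Ppd z * S')) (at t)"
      unfolding u_def U'_def z_def S'_def
      apply (rule derivative_eq_intros dU[OF tA] DERIV_chain2[OF dpoly_Pp dS[OF tA]] refl)+
      apply simp done
    have d1': "((\<lambda>t. U t^2 - Pp (S t)) has_field_derivative 0) (at t)"
      apply (rule has_field_derivative_transform_within_open[of "\<lambda>t. 0" 0 t A])
      using tA oA basic by auto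
    have rel1: "2 * u * U' = Ppd z * S'" using DERIV_unique[OF d1 d1'] by simp
    have d2: "((\<lambda>t. aF (S t) / U t) has_field_derivative (aFd z * S' * u - aF z * U') / (u * u)) (at t)"
      unfolding u_def U'_def z_def S'_def
      by (rule DERIV_divide[OF DERIV_chain2[OF d_aF[OF ADnz[OF tA]] dS[OF tA]] dU[OF tA]]) (use basic[OF tA] in simp)
    have d2a: "((\<lambda>t. 1/2 + aF (S t) / U t) has_field_derivative (aFd z * S' * u - aF z * U') / (u * u)) (at t)"
      using DERIV_add[OF DERIV_const d2] by simp
    have d2b: "((\<lambda>t. 1/2 + aF (S t) / U t) has_field_derivative 1) (at t)"
      apply (rule has_field_derivative_transform_within_open[of "\<lambda>t. t" 1 t A])
      using tA oA Tf by auto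
    have r2: "(aFd z * S' * u - aF z * U') / (u * u) = 1" using DERIV_unique[OF d2a d2b] .
    have r2': "aFd z * S' * u - aF z * U' = u * u" using r2 b(1) by (simp add: field_simps)
    have c2: "2 * Pp z * aFd z - aF z * Ppd z = 2 * Pp z * alF z"
      using C2[of z] b unfolding Pp_def by (simp add: field_simps)
    have r3: "S' * alF z = u"
    proof -
      have "2 * Pp z * (S' * alF z) = 2 * Pp z * u"
      proof -
        have "2 * Pp z * (S' * alF z) = S' * (2 * Pp z * aFd z - aF z * Ppd z)" using c2 by (simp add: algebra_simps)
        also have "\<dots> = 2 * Pp z * u" using r2' rel1 b(6) by algebra
        finally show ?thesis .
      qed
      moreover have "Pp z \<noteq> 0" using b unfolding Pp_def by simp
      ultimately show ?thesis by simp
    qed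
    have alnz: "alF z \<noteq> 0" using r3 b(1) by auto
    have k6nz: "k6 z \<noteq> 0" and smnz: "sm z \<noteq> 0" using alnz unfolding alF_def by auto
    have d3: "((\<lambda>t. bF (S t) / U t) has_field_derivative (bFd z * S' * u - bF z * U') / (u * u)) (at t)"
      unfolding u_def U'_def z_def S'_def
      by (rule DERIV_divide[OF DERIV_chain2[OF d_bF[OF BDnz[OF tA]] dS[OF tA]] dU[OF tA]]) (use basic[OF tA] in simp)
    have d3a: "((\<lambda>t. Y_curve (S t) (U t)) has_field_derivative (bFd z * S' * u - bF z * U') / (u * u)) (at t)"
      apply (rule has_field_derivative_transform_within_open[of "\<lambda>t. 1/2 + bF (S t) / U t" _ t A])
      using DERIV_add[OF DERIV_const d3] apply simp
      using tA oA Yf by auto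
    have c3: "2 * Pp z * bFd z - bF z * Ppd z = 2 * Pp z * (kF z * alF z)"
      using C3[of z] b k6nz unfolding Pp_def by (simp add: field_simps)
    have r4: "(bFd z * S' * u - bF z * U') / (u * u) = kF z"
    proof -
      have "2 * u * (bFd z * S' * u - bF z * U') = 2 * u * (u * u * kF z)"
      proof -
        have "2 * u * (bFd z * S' * u - bF z * U') = S' * (2 * Pp z * bFd z - bF z * Ppd z)"
          using rel1 b(6) by algebra
        also have "\<dots> = 2 * Pp z * kF z * (S' * alF z)" unfolding c3 by (simp add: algebra_simps)
        also have "\<dots> = 2 * u * (u * u * kF z)" unfolding r3 by (simp add: b(6)[symmetric] power2_eq_square ac_simps)
        finally show ?thesis .
      qed
      then have "bFd z * S' * u - bF z * U' = u * u * kF z" using b(1) by simp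
      then show ?thesis using b(1) by (simp add: field_simps)
    qed
    have "deriv (\<lambda>t. Y_curve (S t) (U t)) t = kF z" using DERIV_imp_deriv[OF d3a] r4 by simp
    then show ?thesis using r3 alnz k6nz smnz unfolding z_def u_def S'_def by simp
  qed
  show ?thesis
    unfolding solves_PVI_on_def
  proof (intro conjI ballI)
    show "(\<lambda>t. Y_curve (S t) (U t)) holomorphic_on A"
    proof -
      have h5: "20*(S t)^2 + 4 \<noteq> 0" if "t \<in> A" for t
      proof
        assume "20*(S t)^2 + 4 = 0"
        then have "5*(S t)^2 + 1 = 0" by algebra
        then show False using assms(6)[OF that] by simp
      qed
      have "(\<lambda>t. 1/2 + bF (S t) / U t) holomorphic_on A"
        unfolding bF_def Bn_def BD_def s1_def p5_def
        using basic unfolding s1_def p5_def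
        by (intro holomorphic_intros assms(2,3)) (auto simp: h5)
      then show ?thesis by (rule holomorphic_transform) (use Yf in auto)
    qed
  next
    fix t assume tA: "t \<in> A"
    define z where "z = S t"
    define u where "u = U t"
    have b: "u \<noteq> 0" "s1 z \<noteq> 0" "p5 z \<noteq> 0" "s2 z \<noteq> 0" "p9 z \<noteq> 0" "u^2 = Pp z"
      using basic[OF tA] unfolding z_def u_def by auto
    have kk: "deriv S t * alF z = u" "alF z \<noteq> 0" "k6 z \<noteq> 0" "sm z \<noteq> 0"
      using key[OF tA] unfolding z_def u_def by auto
    have dy: "deriv (\<lambda>t. Y_curve (S t) (U t)) t = kF z" using key[OF tA] unfolding z_def by simp
    have ev: "eventually (\<lambda>x. deriv (\<lambda>t. Y_curve (S t) (U t)) x = kF (S x)) (nhds t)"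
      using eventually_nhds_in_open[OF oA tA] by (rule eventually_mono) (use key in auto)
    have KDnz: "KD z \<noteq> 0" using b kk unfolding KD_def by simp
    have dd: "deriv (deriv (\<lambda>t. Y_curve (S t) (U t))) t = KPF z * deriv S t"
    proof -
      have "deriv (deriv (\<lambda>t. Y_curve (S t) (U t))) t = deriv (\<lambda>x. kF (S x)) t"
        by (rule deriv_cong_ev[OF ev refl])
      also have "\<dots> = KPF z * deriv S t"
        using DERIV_imp_deriv[OF DERIV_chain2[OF d_kF[OF KDnz[unfolded z_def]] dS[OF tA]]]
        unfolding z_def .
      finally show ?thesis .
    qed
    have Tt: "t = 1/2 + aF z / u" using Tf[OF tA] unfolding z_def u_def .
    have Yt: "Y_curve (S t) (U t) = 1/2 + bF z / u" using Yf[OF tA] unfolding z_def u_def .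
    have ny1: "1/2 + bF z/u \<noteq> 0" "1/2 + bF z/u \<noteq> 1" using assms(8)[OF tA] unfolding Yt by auto
    have ny3': "1/2 + bF z/u \<noteq> t" using assms(8)[OF tA] unfolding Yt by auto
    have ny3: "1/2 + bF z/u \<noteq> 1/2 + aF z/u" using ny3' Tt by simp
    have nt: "1/2 + aF z/u \<noteq> 0" "1/2 + aF z/u \<noteq> 1" using assms(7)[OF tA] Tt by auto
    have f1: "1/2 + bF z/u = (u + 2*bF z)/(2*u)" using b(1) by (simp add: field_simps)
    have f2: "1/2 + bF z/u - 1 = (2*bF z - u)/(2*u)" using b(1) by (simp add: field_simps)
    have f3: "(1/2 + bF z/u) - (1/2 + aF z/u) = (bF z - aF z)/u" using b(1) by (simp add: field_simps)
    have f4: "1/2 + aF z/u = (u + 2*aF z)/(2*u)" using b(1) by (simp add: field_simps)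
    have f5: "1/2 + aF z/u - 1 = (2*aF z - u)/(2*u)" using b(1) by (simp add: field_simps)
    have n1: "u + 2*bF z \<noteq> 0"
    proof assume "u + 2*bF z = 0" then have "1/2 + bF z/u = 0" unfolding f1 by simp then show False using ny1(1) by simp qed
    have n2: "2*bF z - u \<noteq> 0"
    proof assume "2*bF z - u = 0" then have "1/2 + bF z/u - 1 = 0" unfolding f2 by simp then show False using ny1(2) by (metis eq_iff_diff_eq_0) qed
    have n3: "bF z - aF z \<noteq> 0"
    proof assume "bF z - aF z = 0" then have "(1/2 + bF z/u) - (1/2 + aF z/u) = 0" unfolding f3 by simp then show False using ny3 by (metis eq_iff_diff_eq_0) qed
    have n4: "u + 2*aF z \<noteq> 0"
    proof assume "u + 2*aF z = 0" then have "1/2 + aF z/u = 0" unfolding f4 by simp then show False using nt(1) by simp qed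
    have n5: "2*aF z - u \<noteq> 0"
    proof assume "2*aF z - u = 0" then have "1/2 + aF z/u - 1 = 0" unfolding f5 by simp then show False using nt(2) by (metis eq_iff_diff_eq_0) qed
    have t12: "sm z \<noteq> 0" "t1 z \<noteq> 0" "t2 z \<noteq> 0" using kk(3) unfolding k6_def by auto
    have q1nz: "4*bF z^2 - Pp z \<noteq> 0"
    proof -
      have "4*bF z^2 - Pp z = 4*bF z^2 - u^2" using b(6) by simp also have "\<dots> = (u + 2*bF z) * (2*bF z - u)" by algebra finally have "4*bF z^2 - Pp z = (u + 2*bF z) * (2*bF z - u)" .
      then show ?thesis using n1 n2 by simp
    qed
    have hhnz: "hh z \<noteq> 0" using q1nz unfolding st_q1[OF b(2) b(5) b(3)] N_q1_def by auto
    have ccnz: "cc z \<noteq> 0" using n3 unfolding st_c[OF b(2) b(5) b(3)] N_c_def by auto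
    have G: "PVI_rhs (1/2) (1/2) (1/2) (2/3) (1/2 + aF z/u) (1/2 + bF z/u) (kF z) = u * (KPF z / alF z)"
      using generic_rhs[where k="kF z", OF b(1) n1 n2 n3 n4 n5]
      unfolding b(6) C5[OF b(2) b(4) t12(1) b(5) b(3) t12(2) t12(3) hhnz ccnz] .
    have P: "PVI_rhs (1/2) (1/2) (1/2) (2/3) t (Y_curve (S t) (U t)) (deriv (\<lambda>t. Y_curve (S t) (U t)) t)
        = PVI_rhs (1/2) (1/2) (1/2) (2/3) (1/2 + aF z/u) (1/2 + bF z/u) (kF z)"
      unfolding Yt dy using Tt by simp
    have "deriv S t = u / alF z" using kk(1) kk(2) by (simp add: field_simps)
    then show "deriv (deriv (\<lambda>t. Y_curve (S t) (U t))) t =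
        PVI_rhs (1/2) (1/2) (1/2) (2/3) t (Y_curve (S t) (U t)) (deriv (\<lambda>t. Y_curve (S t) (U t)) t)"
      unfolding P G dd by simp
  qed
qed

end
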